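(* Let $\mathcal E$ be a nonlinear order preserving form on $L^2(\mu)$. Then $\||f|\|_L\le\|f\|_L$ for all $f\in M(\mathcal E)$. If $\mathcal E$ is a nonlinear Dirichlet form, then $\|Cf\|_L\le\|f\|_L$ for all normal contractions $C\colon\mathbb R\to\mathbb R$ and all $f\in M(\mathcal E)$.
   Context: $(X,\mathfrak A,\mu)$ is a $\sigma$-finite measure space. All convex functionals $\mathcal E\colon L^2(\mu)\to[0,\infty]$ are assumed symmetric ($\mathcal E(-f)=\mathcal E(f)$) with $\mathcal E(0)=0$. A normal contraction is a 1-Lipschitz $C\colon\mathbb R\to\mathbb R$ with $C(0)=0$; it operates on $\mathcal E$ if $\mathcal E(f+Cg)+\mathcal E(f-Cg)\le\mathcal E(f+g)+\mathcal E(f-g)$ for all $f,g\in L^2(\mu)$. A nonlinear order preserving form is a lower semicontinuous convex such $\mathcal E$ on which $x\mapsto|x|$ operates; a nonlinear Dirichlet form is one on which all normal contractions operate. $M(\mathcal E)=\{f:\lim_{\lambda\to0+}\mathcal E(\lambda f)=0\}$ and $\|f\|_L=\inf\{\lambda>0:\mathcal E(\lambda^{-1}f)\le1\}$ for $f\in M(\mathcal E)$. *)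

theory Defs
  imports "HOL-Analysis.Analysis"
begin

text \<open>L^2(mu), represented by square-integrable measurable representatives;
  functionals are required to respect a.e. equality (so they are functionals on the
  quotient space L^2(mu)).\<close>
definition L2 :: "'a measure \<Rightarrow> ('a \<Rightarrow> real) set" where
  "L2 M = {f. f \<in> borel_measurable M \<and> integrable M (\<lambda>x. (f x)^2)}"

definition l2_functional :: "'a measure \<Rightarrow> (('a \<Rightarrow> real) \<Rightarrow> ennreal) \<Rightarrow> bool" where
  "l2_functional M E \<longleftrightarrow>
     (\<forall>f\<in>L2 M. \<forall>g\<in>L2 M. (AE x in M. f x = g x) \<longrightarrow> E f = E g) \<and>
     E (\<lambda>x. 0) = 0 \<and>
     (\<forall>f\<in>L2 M. E (\<lambda>x. - f x) = E f)"

definition convex_L2 :: "'a measure \<Rightarrow> (('a \<Rightarrow> real) \<Rightarrow> ennreal) \<Rightarrow> bool" where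
  "convex_L2 M E \<longleftrightarrow>
     (\<forall>f\<in>L2 M. \<forall>g\<in>L2 M. \<forall>t::real. 0 \<le> t \<and> t \<le> 1 \<longrightarrow>
        E (\<lambda>x. t * f x + (1 - t) * g x) \<le> ennreal t * E f + ennreal (1 - t) * E g)"

definition lsc_L2 :: "'a measure \<Rightarrow> (('a \<Rightarrow> real) \<Rightarrow> ennreal) \<Rightarrow> bool" where
  "lsc_L2 M E \<longleftrightarrow>
     (\<forall>f\<in>L2 M. \<forall>F. (\<forall>n. F n \<in> L2 M) \<and>
        ((\<lambda>n. integral\<^sup>L M (\<lambda>x. (F n x - f x)^2)) \<longlonglongrightarrow> 0)
        \<longrightarrow> E f \<le> liminf (\<lambda>n. E (F n)))"

definition normal_contraction :: "(real \<Rightarrow> real) \<Rightarrow> bool" where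
  "normal_contraction C \<longleftrightarrow> C 0 = 0 \<and> (\<forall>x y. \<bar>C x - C y\<bar> \<le> \<bar>x - y\<bar>)"

definition operates :: "'a measure \<Rightarrow> (real \<Rightarrow> real) \<Rightarrow> (('a \<Rightarrow> real) \<Rightarrow> ennreal) \<Rightarrow> bool" where
  "operates M C E \<longleftrightarrow>
     (\<forall>f\<in>L2 M. \<forall>g\<in>L2 M.
        E (\<lambda>x. f x + C (g x)) + E (\<lambda>x. f x - C (g x)) \<le> E (\<lambda>x. f x + g x) + E (\<lambda>x. f x - g x))"

definition order_preserving_form :: "'a measure \<Rightarrow> (('a \<Rightarrow> real) \<Rightarrow> ennreal) \<Rightarrow> bool" where
  "order_preserving_form M E \<longleftrightarrow>
     l2_functional M E \<and> convex_L2 M E \<and> lsc_L2 M E \<and> operates M abs E"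

definition dirichlet_form :: "'a measure \<Rightarrow> (('a \<Rightarrow> real) \<Rightarrow> ennreal) \<Rightarrow> bool" where
  "dirichlet_form M E \<longleftrightarrow>
     l2_functional M E \<and> convex_L2 M E \<and> lsc_L2 M E \<and>
     (\<forall>C. normal_contraction C \<longrightarrow> operates M C E)"

definition ME :: "'a measure \<Rightarrow> (('a \<Rightarrow> real) \<Rightarrow> ennreal) \<Rightarrow> ('a \<Rightarrow> real) set" where
  "ME M E = {f \<in> L2 M. ((\<lambda>l::real. E (\<lambda>x. l * f x)) \<longlongrightarrow> 0) (at_right 0)}"

definition Lnorm :: "(('a \<Rightarrow> real) \<Rightarrow> ennreal) \<Rightarrow> ('a \<Rightarrow> real) \<Rightarrow> real" where
  "Lnorm E f = Inf {l::real. l > 0 \<and> E (\<lambda>x. f x / l) \<le> 1}"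

end

theory Submission
  imports Defs
begin

lemma L2_scale: "g \<in> L2 M \<Longrightarrow> (\<lambda>x. c * g x) \<in> L2 M"
  unfolding L2_def by (auto simp: power_mult_distrib)

lemma L2_div: "g \<in> L2 M \<Longrightarrow> (\<lambda>x. g x / c) \<in> L2 M"
  using L2_scale[of g M "1/c"] by simp

lemma L2_neg: "g \<in> L2 M \<Longrightarrow> (\<lambda>x. - g x) \<in> L2 M"
  using L2_scale[of g M "-1"] by simp

lemma contr_cont: "normal_contraction C \<Longrightarrow> continuous_on UNIV C"
  unfolding normal_contraction_def continuous_on_iff dist_real_def
  by (meson le_less_trans)

lemma L2_contr: assumes "normal_contraction C" "g \<in> L2 M" shows "(\<lambda>x. C (g x)) \<in> L2 M"
proof -
  have m: "g \<in> borel_measurable M" "integrable M (\<lambda>x. (g x)^2)" using assms(2) unfolding L2_def by auto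
  have cm: "C \<in> borel_measurable borel" using borel_measurable_continuous_onI[OF contr_cont[OF assms(1)]] .
  have "(\<lambda>x. C (g x)) \<in> borel_measurable M" using measurable_compose[OF m(1) cm] by (simp add: o_def)
  moreover have "\<bar>C y\<bar> \<le> \<bar>y\<bar>" for y using assms(1) unfolding normal_contraction_def
    by (metis diff_zero)
  hence "(C y)^2 \<le> y^2" for y by (simp add: abs_le_square_iff)
  note mC = calculation
  have sq: "(C y)^2 \<le> y^2" for y by fact
  have mC2: "(\<lambda>x. (C (g x))^2) \<in> borel_measurable M" using mC by measurable
  have "integrable M (\<lambda>x. (C (g x))^2)"
    by (rule Bochner_Integration.integrable_bound[OF m(2) mC2]) (rule AE_I2, simp add: sq)
  ultimately show ?thesis unfolding L2_def by auto
qed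

lemma L2_abs: "g \<in> L2 M \<Longrightarrow> (\<lambda>x. \<bar>g x\<bar>) \<in> L2 M"
proof -
  have "normal_contraction abs" unfolding normal_contraction_def using abs_triangle_ineq3 by auto
  thus "g \<in> L2 M \<Longrightarrow> (\<lambda>x. \<bar>g x\<bar>) \<in> L2 M" using L2_contr[of abs g M] by simp
qed

lemma ennreal_half: "(a::ennreal) + a \<le> b + b \<Longrightarrow> a \<le> b"
  by (meson add_strict_mono linorder_not_less)

lemma operates_le:
  assumes "l2_functional M E" "operates M C E" "g \<in> L2 M" "(\<lambda>x. C (g x)) \<in> L2 M"
  shows "E (\<lambda>x. C (g x)) \<le> E g"
proof -
  have z: "(\<lambda>x. 0::real) \<in> L2 M" unfolding L2_def by simp
  have s: "\<And>f. f \<in> L2 M \<Longrightarrow> E (\<lambda>x. - f x) = E f" proof -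
    fix f assume "f \<in> L2 M"
    moreover have "\<forall>f\<in>L2 M. E (\<lambda>x. - f x) = E f" using assms(1) unfolding l2_functional_def by (elim conjE)
    ultimately show "E (\<lambda>x. - f x) = E f" by simp
  qed
  have op: "\<forall>f\<in>L2 M. \<forall>g\<in>L2 M.
        E (\<lambda>x. f x + C (g x)) + E (\<lambda>x. f x - C (g x)) \<le> E (\<lambda>x. f x + g x) + E (\<lambda>x. f x - g x)"
    using assms(2) unfolding operates_def .
  note op1 = op[rule_format, OF z assms(3)]
  have e1: "(\<lambda>x. (0::real) + C (g x)) = (\<lambda>x. C (g x))" "(\<lambda>x. (0::real) - C (g x)) = (\<lambda>x. - C (g x))"
     "(\<lambda>x. (0::real) + g x) = g" "(\<lambda>x. (0::real) - g x) = (\<lambda>x. - g x)" by auto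
  have "E (\<lambda>x. C (g x)) + E (\<lambda>x. - C (g x)) \<le> E g + E (\<lambda>x. - g x)"
    using op1 unfolding e1 .
  hence "E (\<lambda>x. C (g x)) + E (\<lambda>x. C (g x)) \<le> E g + E g"
    unfolding s[OF assms(3)] s[OF assms(4)] .
  thus ?thesis by (rule ennreal_half)
qed

lemma Lnorm_mono:
  assumes "f \<in> ME M E" "\<And>l. l > 0 \<Longrightarrow> E (\<lambda>x. h x / l) \<le> E (\<lambda>x. f x / l)"
  shows "Lnorm E h \<le> Lnorm E f"
proof -
  have t: "((\<lambda>l::real. E (\<lambda>x. l * f x)) \<longlongrightarrow> 0) (at_right 0)" using assms(1) unfolding ME_def by auto
  have "\<forall>\<^sub>F l in at_right (0::real). E (\<lambda>x. l * f x) < 1" using order_tendstoD(2)[OF t] by simp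
  moreover have "\<forall>\<^sub>F l in at_right (0::real). l > 0" by (simp add: eventually_at_right_less)
  ultimately have "\<forall>\<^sub>F l in at_right (0::real). E (\<lambda>x. l * f x) < 1 \<and> l > 0" by (rule eventually_conj)
  then obtain l :: real where l: "E (\<lambda>x. l * f x) < 1" "l > 0"
    using eventually_happens'[OF trivial_limit_at_right_real] by blast
  have "1/l \<in> {l::real. l > 0 \<and> E (\<lambda>x. f x / l) \<le> 1}" using l by (simp add: mult.commute)
  hence ne: "{l::real. l > 0 \<and> E (\<lambda>x. f x / l) \<le> 1} \<noteq> {}" by blast
  have bd: "bdd_below {l::real. l > 0 \<and> E (\<lambda>x. h x / l) \<le> 1}" by (rule bdd_belowI[of _ 0]) auto
  have sub: "{l::real. l > 0 \<and> E (\<lambda>x. f x / l) \<le> 1} \<subseteq> {l::real. l > 0 \<and> E (\<lambda>x. h x / l) \<le> 1}"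
  proof
    fix l assume "l \<in> {l::real. l > 0 \<and> E (\<lambda>x. f x / l) \<le> 1}"
    thus "l \<in> {l::real. l > 0 \<and> E (\<lambda>x. h x / l) \<le> 1}" using assms(2)[of l] by auto
  qed
  show ?thesis unfolding Lnorm_def by (rule cInf_superset_mono[OF ne bd sub])
qed

theorem lemma3p3:
  fixes M :: "'a measure" and E :: "('a \<Rightarrow> real) \<Rightarrow> ennreal"
  assumes "sigma_finite_measure M"
  shows "(order_preserving_form M E \<longrightarrow>
            (\<forall>f\<in>ME M E. Lnorm E (\<lambda>x. \<bar>f x\<bar>) \<le> Lnorm E f))
       \<and> (dirichlet_form M E \<longrightarrow>
            (\<forall>C f. normal_contraction C \<and> f \<in> ME M E \<longrightarrow> Lnorm E (\<lambda>x. C (f x)) \<le> Lnorm E f))"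
proof (intro conjI impI allI ballI)
  fix f assume op: "order_preserving_form M E" and f: "f \<in> ME M E"
  have fL: "f \<in> L2 M" using f unfolding ME_def by auto
  show "Lnorm E (\<lambda>x. \<bar>f x\<bar>) \<le> Lnorm E f"
  proof (rule Lnorm_mono[OF f])
    fix l :: real assume "l > 0"
    have "E (\<lambda>x. \<bar>f x / l\<bar>) \<le> E (\<lambda>x. f x / l)"
    proof -
      have a: "l2_functional M E" "operates M abs E" using op unfolding order_preserving_form_def by simp_all
      show ?thesis using operates_le[OF a L2_div[OF fL] L2_abs[OF L2_div[OF fL]]] by simp
    qed
    thus "E (\<lambda>x. \<bar>f x\<bar> / l) \<le> E (\<lambda>x. f x / l)" using \<open>l > 0\<close> by simp
  qed
next
  fix C f assume df: "dirichlet_form M E" and Cf: "normal_contraction C \<and> f \<in> ME M E"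
  have fL: "f \<in> L2 M" using Cf unfolding ME_def by auto
  show "Lnorm E (\<lambda>x. C (f x)) \<le> Lnorm E f"
  proof (rule Lnorm_mono)
    show "f \<in> ME M E" using Cf by auto
    fix l :: real assume lp: "l > 0"
    define D where "D = (\<lambda>y. C (l * y) / l)"
    have nD: "normal_contraction D"
      unfolding normal_contraction_def D_def
    proof (intro conjI allI)
      show "C (l * 0) / l = 0" using Cf unfolding normal_contraction_def by simp
      fix x y
      have "\<bar>C (l * x) - C (l * y)\<bar> \<le> \<bar>l * x - l * y\<bar>" using Cf unfolding normal_contraction_def by blast
      also have "\<dots> = l * \<bar>x - y\<bar>" using lp by (simp add: abs_mult right_diff_distrib[symmetric])
      finally show "\<bar>C (l * x) / l - C (l * y) / l\<bar> \<le> \<bar>x - y\<bar>"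
        using lp by (simp add: diff_divide_distrib[symmetric] pos_divide_le_eq mult.commute)
    qed
    have "E (\<lambda>x. D (f x / l)) \<le> E (\<lambda>x. f x / l)"
    proof -
      have a: "l2_functional M E" "operates M D E" using df nD unfolding dirichlet_form_def by simp_all
      show ?thesis using operates_le[OF a L2_div[OF fL] L2_contr[OF nD L2_div[OF fL]]] by simp
    qed
    moreover have "(\<lambda>x. D (f x / l)) = (\<lambda>x. C (f x) / l)" using lp by (simp add: D_def)
    ultimately show "E (\<lambda>x. C (f x) / l) \<le> E (\<lambda>x. f x / l)" by simp
  qed
qed

end
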